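(* For every finite set $A$ of positive reals and every integer $\ell\ge0$, \[F_\ell(A;t)=\big(F_1(A;t)\big)^{\ell}\] as formal power series, where $F_\ell(A;t)=\sum_{n\ge0} r_\ell(\mathcal{C}_{n,A})\frac{t^n}{n!}$.
   Context: Let $A=\{a_1,\dots,a_m\}$ with $a_1>\dots>a_m>0$. For $n\ge1$, $\mathcal{C}_{n,A}$ is the arrangement in $\mathbb{R}^n$ of hyperplanes $x_i-x_j=0$ ($i<j$) and $x_i-x_j=a_k$ ($i\ne j$, $1\le k\le m$). Regions are connected components of the complement of the union of the hyperplanes. The level of $X\subseteq\mathbb{R}^n$ is the smallest integer $\ell\ge0$ such that there are a linear subspace $W$ of dimension $\ell$ and $r>0$ with $X\subseteq\{\bm x:\min_{\bm y\in W}\|\bm x-\bm y\|\le r\}$. $r_\ell(\mathcal{A})$ is the number of regions of $\mathcal{A}$ of level $\ell$. Convention: for $n=0$ there is exactly one region, of level $0$. *)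

theory Defs
  imports "HOL-Analysis.Analysis" "HOL-Library.Function_Algebras"
          "HOL-Computational_Algebra.Formal_Power_Series"
begin

text \<open>Points of R^n are represented as functions x :: nat => real with x i = 0 for i >= n
  (the carrier of the library topology Euclidean_space n); coordinates are indexed 0..n-1.\<close>

definition Rn :: "nat \<Rightarrow> (nat \<Rightarrow> real) set" where
  "Rn n = {x. \<forall>i\<ge>n. x i = 0}"

definition fscale :: "real \<Rightarrow> (nat \<Rightarrow> real) \<Rightarrow> (nat \<Rightarrow> real)" where
  "fscale c x = (\<lambda>i. c * x i)"

definition edist :: "nat \<Rightarrow> (nat \<Rightarrow> real) \<Rightarrow> (nat \<Rightarrow> real) \<Rightarrow> real" where
  "edist n x y = sqrt (\<Sum>i<n. (x i - y i)^2)"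

definition hyperplanes_C :: "nat \<Rightarrow> real set \<Rightarrow> (nat \<Rightarrow> real) set set" where
  "hyperplanes_C n A =
     {{x \<in> Rn n. x i - x j = 0} | i j. i < j \<and> j < n} \<union>
     {{x \<in> Rn n. x i - x j = a} | i j a. i < n \<and> j < n \<and> i \<noteq> j \<and> a \<in> A}"

definition regions_C :: "nat \<Rightarrow> real set \<Rightarrow> (nat \<Rightarrow> real) set set" where
  "regions_C n A =
     connected_components_of
       (subtopology (Euclidean_space n) (Rn n - \<Union>(hyperplanes_C n A)))"

definition within_level :: "nat \<Rightarrow> nat \<Rightarrow> (nat \<Rightarrow> real) set \<Rightarrow> bool" where
  "within_level n l X \<longleftrightarrow>
     (\<exists>W r. W \<subseteq> Rn n \<and> module.subspace fscale W \<and> vector_space.dim fscale W = l \<and> r > 0 \<and>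
        X \<subseteq> {x \<in> Rn n. \<exists>y\<in>W. edist n x y \<le> r})"

definition level :: "nat \<Rightarrow> (nat \<Rightarrow> real) set \<Rightarrow> nat" where
  "level n X = (LEAST l. within_level n l X)"

definition r_level :: "nat \<Rightarrow> nat \<Rightarrow> real set \<Rightarrow> nat" where
  "r_level l n A = card {R \<in> regions_C n A. level n R = l}"

definition F_gen :: "nat \<Rightarrow> real set \<Rightarrow> real fps" where
  "F_gen l A = Abs_fps (\<lambda>n. of_nat (r_level l n A) / fact n)"

end

theory Submission
  imports Defs
begin


definition gen :: "real set \<Rightarrow> nat set \<Rightarrow> (nat \<Rightarrow> real) \<Rightarrow> bool" where
  "gen A I x \<longleftrightarrow> (\<forall>i\<in>I. \<forall>j\<in>I. i \<noteq> j \<longrightarrow> x i \<noteq> x j \<and> (\<forall>a\<in>A. x i - x j \<noteq> a))"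

definition tpe :: "real set \<Rightarrow> nat set \<Rightarrow> (nat \<Rightarrow> real) \<Rightarrow> (nat \<times> nat \<times> real) set" where
  "tpe A I x = {(i,j,a). i\<in>I \<and> j\<in>I \<and> a \<in> insert 0 A \<and> x i - x j < a}"

definition bots :: "real set \<Rightarrow> nat set \<Rightarrow> (nat \<times> nat \<times> real) set \<Rightarrow> nat set" where
  "bots A I \<tau> = {i\<in>I. \<forall>j\<in>I. (j,i,0)\<in>\<tau> \<longrightarrow> (\<forall>a\<in>A. (i,j,a) \<notin> \<tau>)}"

definition botx :: "real set \<Rightarrow> nat set \<Rightarrow> (nat \<Rightarrow> real) \<Rightarrow> nat set" where
  "botx A I x = {i\<in>I. \<forall>j\<in>I. x j < x i \<longrightarrow> (\<forall>a\<in>A. \<not> x i - x j < a)}"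

definition TL :: "real set \<Rightarrow> nat \<Rightarrow> nat set \<Rightarrow> (nat \<times> nat \<times> real) set set" where
  "TL A l I = {tpe A I x | x. gen A I x \<and> card (botx A I x) = l}"

definition restr :: "nat set \<Rightarrow> (nat \<times> nat \<times> real) set \<Rightarrow> (nat \<times> nat \<times> real) set" where
  "restr J \<tau> = {(i,j,a)\<in>\<tau>. i\<in>J \<and> j\<in>J}"

definition cross :: "real set \<Rightarrow> nat set \<Rightarrow> nat set \<Rightarrow> (nat \<times> nat \<times> real) set" where
  "cross A S T = {(i,j,a). i\<in>S \<and> j\<in>T \<and> a \<in> insert 0 A}"

definition Tset :: "real set \<Rightarrow> nat set \<Rightarrow> (nat \<times> nat \<times> real) set \<Rightarrow> nat set" where
  "Tset A I \<tau> = {i\<in>I. \<forall>c\<in>bots A I \<tau>. (i,c,0) \<notin> \<tau>}"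

lemma bots_tpe: "bots A I (tpe A I x) = botx A I x"
  unfolding bots_def tpe_def botx_def by auto

lemma tpe_restr: "J \<subseteq> I \<Longrightarrow> tpe A J x = restr J (tpe A I x)"
  unfolding tpe_def restr_def by auto

lemma gen_subset: "gen A I x \<Longrightarrow> J \<subseteq> I \<Longrightarrow> gen A J x"
  unfolding gen_def by blast

lemma tpe_cong: "(\<And>i. i \<in> I \<Longrightarrow> x i = y i) \<Longrightarrow> tpe A I x = tpe A I y"
  unfolding tpe_def by auto

lemma gen_cong: "(\<And>i. i \<in> I \<Longrightarrow> x i = y i) \<Longrightarrow> gen A I x = gen A I y"
  unfolding gen_def by auto

lemma botx_cong: "(\<And>i. i \<in> I \<Longrightarrow> x i = y i) \<Longrightarrow> botx A I x = botx A I y"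
  unfolding botx_def by auto

lemma tpe_shift: "tpe A I (\<lambda>i. x i + c) = tpe A I x"
  unfolding tpe_def by auto

lemma gen_shift: "gen A I (\<lambda>i. x i + c) = gen A I x"
  unfolding gen_def by auto

lemma botx_shift: "botx A I (\<lambda>i. x i + c) = botx A I x"
  unfolding botx_def by auto

lemma finite_TL: "finite A \<Longrightarrow> finite I \<Longrightarrow> finite (TL A l I)"
proof -
  assume "finite A" "finite I"
  have "TL A l I \<subseteq> Pow (I \<times> I \<times> insert 0 A)"
    unfolding TL_def tpe_def by auto
  moreover have "finite (I \<times> I \<times> insert 0 A)" using \<open>finite A\<close> \<open>finite I\<close> by simp
  ultimately show ?thesis using finite_subset by auto
qed

lemma argmin_botx: "finite I \<Longrightarrow> I \<noteq> {} \<Longrightarrow> \<exists>i\<in>botx A I x. \<forall>j\<in>I. x i \<le> x j"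
proof -
  assume fI: "finite I" and ne: "I \<noteq> {}"
  have "Min (x ` I) \<in> x ` I" using fI ne by simp
  then obtain i where i: "i \<in> I" "x i = Min (x ` I)" by auto
  have m: "\<forall>j\<in>I. x i \<le> x j" using i fI by simp
  have "i \<in> botx A I x" unfolding botx_def using i(1) m by force
  thus ?thesis using m by blast
qed

lemma TL0: "finite I \<Longrightarrow> TL A 0 I = (if I = {} then {{}} else {})"
proof (cases "I = {}")
  case True
  have "\<And>x. tpe A I x = {}" "\<And>x. gen A I x" "\<And>x. botx A I x = {}"
    using True unfolding tpe_def gen_def botx_def by auto
  then show ?thesis using True unfolding TL_def by simp
next
  case False
  assume fI: "finite I"
  { fix x assume "card (botx A I x) = 0"
    moreover have "finite (botx A I x)" using fI unfolding botx_def by auto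
    ultimately have "botx A I x = {}" by simp
    with argmin_botx[OF fI False, of A x] have False by auto }
  then show ?thesis using False unfolding TL_def by auto
qed


lemma TL_relabel_le:
  assumes fA: "finite A" and fK: "finite K" and bij: "bij_betw h J K"
  shows "card (TL A l J) \<le> card (TL A l K)"
proof -
  define mp where "mp = (\<lambda>\<tau>. (\<lambda>(i,j,a). (h i, h j, (a::real))) ` \<tau>)"
  define g where "g = inv_into J h"
  have inj: "inj_on h J" using bij by (simp add: bij_betw_def)
  have gK: "\<And>i. i \<in> K \<Longrightarrow> g i \<in> J \<and> h (g i) = i"
    using bij unfolding g_def by (meson bij_betw_apply bij_betw_inv_into bij_betw_inv_into_right)
  have hJ: "\<And>i. i \<in> J \<Longrightarrow> h i \<in> K \<and> g (h i) = i"
    using bij inj unfolding g_def by (meson bij_betw_apply inv_into_f_f)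
  have sub: "mp ` TL A l J \<subseteq> TL A l K"
  proof
    fix \<sigma> assume "\<sigma> \<in> mp ` TL A l J"
    then obtain x where x: "gen A J x" "card (botx A J x) = l" "\<sigma> = mp (tpe A J x)"
      unfolding TL_def by auto
    define y where "y = x \<circ> g"
    have "gen A K y" using x(1) gK unfolding gen_def y_def by (metis comp_apply)
    moreover have "tpe A K y = mp (tpe A J x)"
    proof (rule set_eqI, clarify)
      fix i j a
      show "(i,j,a) \<in> tpe A K y \<longleftrightarrow> (i,j,a) \<in> mp (tpe A J x)"
      proof
        assume "(i,j,a) \<in> tpe A K y"
        then have "(g i, g j, a) \<in> tpe A J x" and "i \<in> K" "j \<in> K"
          using gK unfolding tpe_def y_def by auto
        then show "(i,j,a) \<in> mp (tpe A J x)" unfolding mp_def using gK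
          by (metis (no_types, lifting) case_prod_conv image_eqI)
      next
        assume "(i,j,a) \<in> mp (tpe A J x)"
        then obtain i' j' where "(i',j',a) \<in> tpe A J x" "i = h i'" "j = h j'"
          unfolding mp_def by auto
        then show "(i,j,a) \<in> tpe A K y" using hJ unfolding tpe_def y_def by auto
      qed
    qed
    moreover have "botx A K y = h ` botx A J x"
    proof (rule set_eqI)
      fix i show "i \<in> botx A K y \<longleftrightarrow> i \<in> h ` botx A J x"
      proof
        assume i: "i \<in> botx A K y"
        have "g i \<in> botx A J x"
        proof -
          have "g i \<in> J" using i gK unfolding botx_def by auto
          moreover have "\<forall>j\<in>J. x j < x (g i) \<longrightarrow> (\<forall>a\<in>A. \<not> x (g i) - x j < a)"
          proof (intro ballI impI)
            fix j a assume "j \<in> J" "x j < x (g i)" "a \<in> A"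
            then show "\<not> x (g i) - x j < a" using i hJ[of j] unfolding botx_def y_def by auto
          qed
          ultimately show ?thesis unfolding botx_def by auto
        qed
        moreover have "i = h (g i)" using i gK unfolding botx_def by auto
        ultimately show "i \<in> h ` botx A J x" by blast
      next
        assume "i \<in> h ` botx A J x"
        then obtain i' where i': "i' \<in> botx A J x" "i = h i'" by auto
        have "i \<in> K" using i' hJ unfolding botx_def by auto
        moreover have "\<forall>j\<in>K. y j < y i \<longrightarrow> (\<forall>a\<in>A. \<not> y i - y j < a)"
        proof (intro ballI impI)
          fix j a assume "j \<in> K" "y j < y i" "a \<in> A"
          then show "\<not> y i - y j < a" using i' gK[of j] hJ[of i'] unfolding botx_def y_def by auto
        qed
        ultimately show "i \<in> botx A K y" unfolding botx_def by auto
      qed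
    qed
    moreover have "inj_on h (botx A J x)" using inj by (rule inj_on_subset) (auto simp: botx_def)
    ultimately have "card (botx A K y) = l" using x(2) by (simp add: card_image)
    then show "\<sigma> \<in> TL A l K" unfolding TL_def using x(3) \<open>gen A K y\<close> \<open>tpe A K y = mp (tpe A J x)\<close> by auto
  qed
  have "inj_on mp (TL A l J)"
  proof -
    have "inj_on (\<lambda>(i,j,a). (h i, h j, (a::real))) (J \<times> J \<times> UNIV)"
      using inj by (auto simp: inj_on_def)
    moreover have "\<Union>(TL A l J) \<subseteq> J \<times> J \<times> UNIV" unfolding TL_def tpe_def by auto
    ultimately have "inj_on (\<lambda>(i,j,a). (h i, h j, (a::real))) (\<Union>(TL A l J))"
      by (rule inj_on_subset)
    then show ?thesis unfolding mp_def by (rule inj_on_image)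
  qed
  then have "card (TL A l J) = card (mp ` TL A l J)" by (simp add: card_image)
  also have "\<dots> \<le> card (TL A l K)" using sub finite_TL[OF fA fK] by (rule card_mono[rotated])
  finally show ?thesis .
qed

lemma TL_relabel:
  assumes fA: "finite A" and fJ: "finite J" and bij: "bij_betw h J K"
  shows "card (TL A l J) = card (TL A l K)"
proof -
  have fK: "finite K" using bij fJ bij_betw_finite by blast
  show ?thesis using TL_relabel_le[OF fA fK bij, of l] TL_relabel_le[OF fA fJ bij_betw_inv_into[OF bij], of l] by (rule antisym)
qed

lemma TL_card_std:
  assumes fA: "finite A" and fJ: "finite J"
  shows "card (TL A l J) = card (TL A l {..<card J})"
proof -
  obtain h where "bij_betw h {0..<card J} J" using ex_bij_betw_nat_finite[OF fJ] by blast
  then show ?thesis using TL_relabel[OF fA _ , of "{..<card J}" h J l] by (simp add: atLeast0LessThan)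
qed


lemma Tset_tpe: "Tset A I (tpe A I x) = {i\<in>I. \<forall>c\<in>botx A I x. \<not> x i < x c}"
  unfolding Tset_def bots_tpe unfolding tpe_def botx_def by auto

lemma botx_subset: "botx A I x \<subseteq> I" unfolding botx_def by auto

lemma split_props:
  assumes Apos: "\<forall>a\<in>A. a > 0" and g: "gen A I x" and b: "b \<in> botx A I x"
    and bmax: "\<forall>c\<in>botx A I x. x c \<le> x b"
    and T: "T = {i\<in>I. x b \<le> x i}"
  shows "botx A T x = {b}" "botx A (I - T) x = botx A I x - {b}"
    "tpe A I x = tpe A T x \<union> tpe A (I - T) x \<union> cross A (I - T) T"
    "Tset A I (tpe A I x) = T"
proof -
  have bI: "b \<in> I" using b botx_subset by auto
  have bb: "\<And>j a. j \<in> I \<Longrightarrow> x j < x b \<Longrightarrow> a \<in> A \<Longrightarrow> a \<le> x b - x j"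
    using b unfolding botx_def by force
  show "botx A T x = {b}"
  proof
    show "{b} \<subseteq> botx A T x" using b bI T unfolding botx_def by auto
    show "botx A T x \<subseteq> {b}"
    proof
      fix i assume i: "i \<in> botx A T x"
      have iI: "i \<in> I" and xbi: "x b \<le> x i" using i T unfolding botx_def by auto
      have "i \<in> botx A I x"
        unfolding botx_def
      proof (intro CollectI conjI ballI impI iI)
        fix j a assume j: "j \<in> I" "x j < x i" "a \<in> A"
        show "\<not> x i - x j < a"
        proof (cases "x b \<le> x j")
          case True then show ?thesis using i j T unfolding botx_def by auto
        next
          case False then show ?thesis using bb[of j a] j xbi by auto
        qed
      qed
      then have "x i \<le> x b" using bmax by auto
      then have "x i = x b" using xbi by auto
      then show "i \<in> {b}" using g iI bI unfolding gen_def by auto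
    qed
  qed
  show "botx A (I - T) x = botx A I x - {b}"
  proof (rule set_eqI)
    fix i
    show "i \<in> botx A (I - T) x \<longleftrightarrow> i \<in> botx A I x - {b}"
    proof (cases "i \<in> I \<and> x i < x b")
      case True
      then have "i \<noteq> b" by auto
      moreover have "\<And>j. j \<in> I \<Longrightarrow> x j < x i \<Longrightarrow> j \<in> I - T" using True T by auto
      ultimately show ?thesis using True T unfolding botx_def by auto
    next
      case False
      have "i \<notin> botx A I x - {b}"
      proof
        assume "i \<in> botx A I x - {b}"
        then have "i \<in> I" "x i \<le> x b" "i \<noteq> b" using bmax botx_subset[of A I x] by auto
        then have "x i \<noteq> x b" using g bI unfolding gen_def by auto
        with \<open>x i \<le> x b\<close> \<open>i \<in> I\<close> False show False by auto
      qed
      moreover have "i \<notin> botx A (I - T) x" using False T botx_subset[of A "I - T" x] by auto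
      ultimately show ?thesis by blast
    qed
  qed
  show "tpe A I x = tpe A T x \<union> tpe A (I - T) x \<union> cross A (I - T) T"
  proof (rule set_eqI, clarify)
    fix i j a
    show "(i,j,a) \<in> tpe A I x \<longleftrightarrow> (i,j,a) \<in> tpe A T x \<union> tpe A (I - T) x \<union> cross A (I - T) T"
    proof
      assume h: "(i,j,a) \<in> tpe A I x"
      then have ij: "i \<in> I" "j \<in> I" "a \<in> insert 0 A" "x i - x j < a" unfolding tpe_def by auto
      have "\<not> (i \<in> T \<and> j \<notin> T)"
      proof
        assume "i \<in> T \<and> j \<notin> T"
        then have "x b \<le> x i" "x j < x b" using T ij by auto
        show False
        proof (cases "a = 0")
          case True then show False using ij \<open>x b \<le> x i\<close> \<open>x j < x b\<close> by auto
        next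
          case False then have "a \<in> A" using ij by auto
          then show False using bb[of j a] ij \<open>x b \<le> x i\<close> \<open>x j < x b\<close> by auto
        qed
      qed
      then show "(i,j,a) \<in> tpe A T x \<union> tpe A (I - T) x \<union> cross A (I - T) T"
        using ij T unfolding tpe_def cross_def by auto
    next
      assume "(i,j,a) \<in> tpe A T x \<union> tpe A (I - T) x \<union> cross A (I - T) T"
      moreover have "(i,j,a) \<in> cross A (I - T) T \<Longrightarrow> (i,j,a) \<in> tpe A I x"
      proof -
        assume c: "(i,j,a) \<in> cross A (I - T) T"
        then have "i \<in> I" "j \<in> I" "x i < x j" "a \<in> insert 0 A" using T unfolding cross_def by auto
        moreover have "0 \<le> a" using Apos \<open>a \<in> insert 0 A\<close> by force
        ultimately show ?thesis unfolding tpe_def by auto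
      qed
      ultimately show "(i,j,a) \<in> tpe A I x" using T unfolding tpe_def by auto
    qed
  qed
  show "Tset A I (tpe A I x) = T"
  proof -
    have "{i\<in>I. \<forall>c\<in>botx A I x. \<not> x i < x c} = T"
      using T bmax b by force
    then show ?thesis by (simp add: Tset_tpe)
  qed
qed


lemma finite_botx: "finite I \<Longrightarrow> finite (botx A I x)"
  by (rule finite_subset[OF botx_subset])

definition phi :: "real set \<Rightarrow> nat set \<Rightarrow> (nat \<times> nat \<times> real) set \<Rightarrow> nat set \<times> (nat \<times> nat \<times> real) set \<times> (nat \<times> nat \<times> real) set" where
  "phi A I \<tau> = (Tset A I \<tau>, restr (Tset A I \<tau>) \<tau>, restr (I - Tset A I \<tau>) \<tau>)"

lemma fwd:
  assumes Apos: "\<forall>a\<in>A. a > 0" and fI: "finite I" and g: "gen A I x" and l: "card (botx A I x) = l" "l \<ge> 1"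
  obtains T where "T \<subseteq> I" "phi A I (tpe A I x) = (T, tpe A T x, tpe A (I - T) x)"
    "tpe A T x \<in> TL A 1 T" "tpe A (I - T) x \<in> TL A (l - 1) (I - T)"
    "tpe A I x = tpe A T x \<union> tpe A (I - T) x \<union> cross A (I - T) T"
proof -
  have fb: "finite (botx A I x)" using finite_botx[OF fI] .
  have ne: "botx A I x \<noteq> {}" using l by auto
  have "Max (x ` botx A I x) \<in> x ` botx A I x" using fb ne by simp
  then obtain b where b: "b \<in> botx A I x" "x b = Max (x ` botx A I x)" by auto
  have bmax: "\<forall>c\<in>botx A I x. x c \<le> x b" using b fb by simp
  define T where "T = {i\<in>I. x b \<le> x i}"
  note sp = split_props[OF Apos g b(1) bmax T_def]
  have TI: "T \<subseteq> I" unfolding T_def by auto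
  have "phi A I (tpe A I x) = (T, restr T (tpe A I x), restr (I - T) (tpe A I x))"
    unfolding phi_def sp(4) by simp
  also have "\<dots> = (T, tpe A T x, tpe A (I - T) x)"
    using tpe_restr[OF TI, of A x] tpe_restr[of "I - T" I A x] by simp
  finally have ph: "phi A I (tpe A I x) = (T, tpe A T x, tpe A (I - T) x)" .
  have c1: "card (botx A T x) = 1" using sp(1) by simp
  have c2: "card (botx A (I - T) x) = l - 1" using sp(2) b(1) fb l by simp
  have g1: "gen A T x" using gen_subset[OF g TI] .
  have g2: "gen A (I - T) x" using gen_subset[OF g, of "I - T"] by blast
  have m1: "tpe A T x \<in> TL A 1 T" unfolding TL_def by (rule CollectI, rule exI[of _ x]) (simp add: c1 g1)
  have m2: "tpe A (I - T) x \<in> TL A (l - 1) (I - T)" unfolding TL_def by (rule CollectI, rule exI[of _ x]) (simp add: c2 g2)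
  show ?thesis by (rule that[OF TI ph m1 m2 sp(3)])
qed

lemma phi_inj:
  assumes Apos: "\<forall>a\<in>A. a > 0" and fI: "finite I" and l: "l \<ge> 1"
  shows "inj_on (phi A I) (TL A l I)"
proof (rule inj_onI)
  fix \<tau>1 \<tau>2 assume t1: "\<tau>1 \<in> TL A l I" and t2: "\<tau>2 \<in> TL A l I" and eq: "phi A I \<tau>1 = phi A I \<tau>2"
  obtain x where x: "\<tau>1 = tpe A I x" "gen A I x" "card (botx A I x) = l" using t1 unfolding TL_def by auto
  obtain y where y: "\<tau>2 = tpe A I y" "gen A I y" "card (botx A I y) = l" using t2 unfolding TL_def by auto
  obtain T1 where T1: "phi A I (tpe A I x) = (T1, tpe A T1 x, tpe A (I - T1) x)"
    "tpe A I x = tpe A T1 x \<union> tpe A (I - T1) x \<union> cross A (I - T1) T1"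
    using fwd[OF Apos fI x(2) x(3) l] by metis
  obtain T2 where T2: "phi A I (tpe A I y) = (T2, tpe A T2 y, tpe A (I - T2) y)"
    "tpe A I y = tpe A T2 y \<union> tpe A (I - T2) y \<union> cross A (I - T2) T2"
    using fwd[OF Apos fI y(2) y(3) l] by metis
  have h1: "phi A I \<tau>1 = (T1, tpe A T1 x, tpe A (I - T1) x)" using T1(1) x(1) by simp
  have h2: "phi A I \<tau>2 = (T2, tpe A T2 y, tpe A (I - T2) y)" using T2(1) y(1) by simp
  have P: "(T1, tpe A T1 x, tpe A (I - T1) x) = (T2, tpe A T2 y, tpe A (I - T2) y)"
  proof -
    have "(T1, tpe A T1 x, tpe A (I - T1) x) = phi A I \<tau>1" using h1 by (rule sym)
    also have "\<dots> = phi A I \<tau>2" by (rule eq)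
    also have "\<dots> = (T2, tpe A T2 y, tpe A (I - T2) y)" by (rule h2)
    finally show ?thesis .
  qed
  have e1: "T1 = T2" using arg_cong[OF P, of fst] by simp
  have e2: "tpe A T1 x = tpe A T2 y" using arg_cong[OF P, of "fst \<circ> snd"] by simp
  have e3: "tpe A (I - T1) x = tpe A (I - T2) y" using arg_cong[OF P, of "snd \<circ> snd"] by simp
  have "\<tau>1 = tpe A T1 x \<union> tpe A (I - T1) x \<union> cross A (I - T1) T1" using x(1) T1(2) by simp
  also have "\<dots> = tpe A T2 y \<union> tpe A (I - T2) y \<union> cross A (I - T2) T2" using e1 e2 e3 by simp
  also have "\<dots> = \<tau>2" using y(1) T2(2) by simp
  finally show "\<tau>1 = \<tau>2" .
qed

lemma phi_surj:
  assumes fA: "finite A" and Apos: "\<forall>a\<in>A. a > 0" and fI: "finite I" and l: "l \<ge> 1"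
    and TI: "T \<subseteq> I" and s: "\<sigma> \<in> TL A 1 T" and r: "\<rho> \<in> TL A (l - 1) (I - T)"
  shows "(T, \<sigma>, \<rho>) \<in> phi A I ` TL A l I"
proof -
  define S where "S = I - T"
  obtain y where y: "\<sigma> = tpe A T y" "gen A T y" "card (botx A T y) = 1" using s unfolding TL_def by auto
  obtain z where z: "\<rho> = tpe A S z" "gen A S z" "card (botx A S z) = l - 1" using r unfolding TL_def S_def by auto
  define K where "K = (\<Sum>i\<in>I. \<bar>y i\<bar>) + (\<Sum>i\<in>I. \<bar>z i\<bar>) + \<Sum>A + 1"
  define x where "x = (\<lambda>i. if i \<in> T then y i + K else z i)"
  have fT: "finite T" using fI TI finite_subset by blast
  have sA: "\<And>a. a \<in> insert 0 A \<Longrightarrow> a \<le> \<Sum>A"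
  proof -
    fix a assume "a \<in> insert 0 A"
    moreover have "0 \<le> \<Sum>A" using Apos by (meson less_imp_le sum_nonneg)
    moreover have "a \<in> A \<Longrightarrow> a \<le> \<Sum>A" using Apos fA by (intro member_le_sum) auto
    ultimately show "a \<le> \<Sum>A" by auto
  qed
  have key: "\<And>i j a. i \<in> T \<Longrightarrow> j \<in> S \<Longrightarrow> a \<in> insert 0 A \<Longrightarrow> x i - x j > a"
  proof -
    fix i j a assume ij: "i \<in> T" "j \<in> S" "a \<in> insert 0 A"
    have "\<bar>y i\<bar> \<le> (\<Sum>i\<in>I. \<bar>y i\<bar>)" using ij TI fI by (intro member_le_sum) auto
    moreover have "\<bar>z j\<bar> \<le> (\<Sum>i\<in>I. \<bar>z i\<bar>)" using ij fI unfolding S_def by (intro member_le_sum) auto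
    moreover have "j \<notin> T" using ij S_def by auto
    ultimately show "x i - x j > a" using ij(1) sA[OF ij(3)] unfolding x_def K_def by auto
  qed
  have xT: "\<And>i. i \<in> T \<Longrightarrow> x i = y i + K" unfolding x_def by auto
  have xS: "\<And>i. i \<in> S \<Longrightarrow> x i = z i" unfolding x_def S_def by auto
  have tT: "tpe A T x = tpe A T y" using tpe_cong[of T x "\<lambda>i. y i + K" A, OF xT] tpe_shift by simp
  have tS: "tpe A S x = tpe A S z" using tpe_cong[of S x z A, OF xS] .
  have bT: "botx A T x = botx A T y" using botx_cong[of T x "\<lambda>i. y i + K" A, OF xT] botx_shift by simp
  have bS: "botx A S x = botx A S z" using botx_cong[of S x z A, OF xS] .
  have gT: "gen A T x" using gen_cong[of T x "\<lambda>i. y i + K" A, OF xT] gen_shift y(2) by simp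
  have gS: "gen A S x" using gen_cong[of S x z A, OF xS] z(2) by simp
  have ISU: "I = T \<union> S" "T \<inter> S = {}" using TI S_def by auto
  have gI: "gen A I x"
    unfolding gen_def
  proof (intro ballI impI)
    fix i j assume ij: "i \<in> I" "j \<in> I" "i \<noteq> j"
    show "x i \<noteq> x j \<and> (\<forall>a\<in>A. x i - x j \<noteq> a)"
    proof (cases "i \<in> T")
      case True
      show ?thesis
      proof (cases "j \<in> T")
        case True
        then show ?thesis using gT \<open>i \<in> T\<close> ij unfolding gen_def by auto
      next
        case False
        then have "j \<in> S" using ij S_def by auto
        then show ?thesis using key[OF \<open>i\<in>T\<close> \<open>j \<in> S\<close>] by force
      qed
    next
      case False
      then have iS: "i \<in> S" using ij S_def by auto
      show ?thesis
      proof (cases "j \<in> T")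
        case True
        have "x j - x i > 0" using key[OF True iS, of 0] by auto
        moreover have "\<forall>a\<in>A. x i - x j \<noteq> a" using Apos \<open>x j - x i > 0\<close> by force
        ultimately show ?thesis by auto
      next
        case False
        then have "j \<in> S" using ij S_def by auto
        then show ?thesis using gS iS ij unfolding gen_def by auto
      qed
    qed
  qed
  have botI: "botx A I x = botx A T x \<union> botx A S x"
  proof (rule set_eqI)
    fix i
    show "i \<in> botx A I x \<longleftrightarrow> i \<in> botx A T x \<union> botx A S x"
    proof (cases "i \<in> T")
      case True
      have "\<And>j a. j \<in> S \<Longrightarrow> a \<in> A \<Longrightarrow> \<not> x i - x j < a" using key[OF True] by force
      then show ?thesis using True ISU unfolding botx_def by auto
    next
      case False
      show ?thesis
      proof (cases "i \<in> S")
        case True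
        have "\<And>j. j \<in> T \<Longrightarrow> \<not> x j < x i" using key[OF _ True, of _ 0] by force
        then show ?thesis using True ISU unfolding botx_def by auto
      next
        case False
        then show ?thesis using \<open>i \<notin> T\<close> ISU botx_subset[of A I x] botx_subset[of A T x] botx_subset[of A S x] by auto
      qed
    qed
  qed
  have cardI: "card (botx A I x) = l"
  proof -
    have "card (botx A I x) = card (botx A T x) + card (botx A S x)"
      unfolding botI using ISU fI botx_subset[of A T x] botx_subset[of A S x]
      by (intro card_Un_disjoint) (auto intro: finite_subset)
    then show ?thesis using bT bS y(3) z(3) l by simp
  qed
  obtain bt where bt: "botx A T y = {bt}" using y(3) card_1_singletonE by blast
  have Tne: "T \<noteq> {}" using bt botx_subset[of A T y] by auto
  obtain m where m: "m \<in> botx A T y" "\<forall>j\<in>T. y m \<le> y j" using argmin_botx[OF fT Tne] by blast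
  have mbt: "m = bt" using m bt by auto
  have btT: "bt \<in> T" using bt botx_subset[of A T y] by auto
  have Tset: "Tset A I (tpe A I x) = T"
    unfolding Tset_tpe
  proof (rule set_eqI)
    fix i
    show "i \<in> {i \<in> I. \<forall>c\<in>botx A I x. \<not> x i < x c} \<longleftrightarrow> i \<in> T"
    proof
      assume h: "i \<in> {i \<in> I. \<forall>c\<in>botx A I x. \<not> x i < x c}"
      then have "\<not> x i < x bt" using botI bT bt by auto
      moreover have "i \<in> S \<Longrightarrow> x i < x bt" using key[OF btT, of i 0] by auto
      ultimately show "i \<in> T" using h ISU by auto
    next
      assume iT: "i \<in> T"
      have "\<And>c. c \<in> botx A I x \<Longrightarrow> \<not> x i < x c"
      proof -
        fix c assume c: "c \<in> botx A I x"
        show "\<not> x i < x c"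
        proof (cases "c \<in> S")
          case True
          then show ?thesis using key[OF iT True, of 0] by auto
        next
          case False
          then have "c = bt" using c botI bT bt botx_subset[of A S x] by auto
          then show ?thesis using m(2) mbt iT xT btT by auto
        qed
      qed
      then show "i \<in> {i \<in> I. \<forall>c\<in>botx A I x. \<not> x i < x c}" using iT TI by auto
    qed
  qed
  have "phi A I (tpe A I x) = (T, \<sigma>, \<rho>)"
    unfolding phi_def Tset using tpe_restr[OF TI, of A x, symmetric] tpe_restr[of S I A x, symmetric]
      tT tS y(1) z(1) S_def by auto
  moreover have "tpe A I x \<in> TL A l I" unfolding TL_def using gI cardI by auto
  ultimately show ?thesis by (metis image_eqI)
qed

lemma TL_rec:
  assumes fA: "finite A" and Apos: "\<forall>a\<in>A. a > 0" and fI: "finite I" and l: "l \<ge> 1"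
  shows "card (TL A l I) = (\<Sum>T\<in>Pow I. card (TL A 1 T) * card (TL A (l - 1) (I - T)))"
proof -
  have "phi A I ` TL A l I = Sigma (Pow I) (\<lambda>T. TL A 1 T \<times> TL A (l - 1) (I - T))"
  proof
    show "phi A I ` TL A l I \<subseteq> Sigma (Pow I) (\<lambda>T. TL A 1 T \<times> TL A (l - 1) (I - T))"
    proof
      fix p assume "p \<in> phi A I ` TL A l I"
      then obtain x where "gen A I x" "card (botx A I x) = l" "p = phi A I (tpe A I x)"
        unfolding TL_def by auto
      then show "p \<in> Sigma (Pow I) (\<lambda>T. TL A 1 T \<times> TL A (l - 1) (I - T))"
      proof -
        obtain T where "T \<subseteq> I" "phi A I (tpe A I x) = (T, tpe A T x, tpe A (I - T) x)"
          "tpe A T x \<in> TL A 1 T" "tpe A (I - T) x \<in> TL A (l - 1) (I - T)"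
          using fwd[OF Apos fI \<open>gen A I x\<close> \<open>card (botx A I x) = l\<close> l] by metis
        then show ?thesis using \<open>p = phi A I (tpe A I x)\<close> by simp
      qed
    qed
    show "Sigma (Pow I) (\<lambda>T. TL A 1 T \<times> TL A (l - 1) (I - T)) \<subseteq> phi A I ` TL A l I"
      using phi_surj[OF fA Apos fI l] by auto
  qed
  then have "card (TL A l I) = card (Sigma (Pow I) (\<lambda>T. TL A 1 T \<times> TL A (l - 1) (I - T)))"
    using phi_inj[OF Apos fI l] card_image by metis
  also have "\<dots> = (\<Sum>T\<in>Pow I. card (TL A 1 T \<times> TL A (l - 1) (I - T)))"
  proof (rule card_SigmaI)
    show "finite (Pow I)" using fI by simp
    show "\<forall>T\<in>Pow I. finite (TL A 1 T \<times> TL A (l - 1) (I - T))"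
    proof
      fix T assume "T \<in> Pow I"
      then have "finite T" "finite (I - T)" using fI finite_subset by auto
      then show "finite (TL A 1 T \<times> TL A (l - 1) (I - T))"
        using finite_TL[OF fA] by (intro finite_cartesian_product) auto
    qed
  qed
  also have "\<dots> = (\<Sum>T\<in>Pow I. card (TL A 1 T) * card (TL A (l - 1) (I - T)))"
    by (simp add: card_cartesian_product)
  finally show ?thesis .
qed


lemma vs_fscale: "vector_space fscale"
  by unfold_locales (auto simp: fscale_def fun_eq_iff algebra_simps)

interpretation V: vector_space fscale by (rule vs_fscale)

definition UU :: "nat \<Rightarrow> real set \<Rightarrow> (nat \<Rightarrow> real) set" where
  "UU n A = {x \<in> Rn n. gen A {..<n} x}"

definition Cell :: "nat \<Rightarrow> real set \<Rightarrow> (nat \<times> nat \<times> real) set \<Rightarrow> (nat \<Rightarrow> real) set" where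
  "Cell n A \<tau> = {x \<in> UU n A. tpe A {..<n} x = \<tau>}"

definition YY :: "nat \<Rightarrow> real set \<Rightarrow> (nat \<Rightarrow> real) topology" where
  "YY n A = subtopology (Euclidean_space n) (UU n A)"

lemma U_eq: "Rn n - \<Union>(hyperplanes_C n A) = UU n A"
proof -
  have h1: "\<Union>{{x \<in> Rn n. x i - x j = 0} | i j. i < j \<and> j < n} = {x \<in> Rn n. \<exists>i j. i < j \<and> j < n \<and> x i - x j = 0}"
    by auto
  have h2: "\<Union>{{x \<in> Rn n. x i - x j = a} | i j a. i < n \<and> j < n \<and> i \<noteq> j \<and> a \<in> A} =
     {x \<in> Rn n. \<exists>i j a. i < n \<and> j < n \<and> i \<noteq> j \<and> a \<in> A \<and> x i - x j = a}"
    by auto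
  have h3: "\<And>x. ((\<exists>i j. i < j \<and> j < n \<and> x i - x j = 0) \<or>
      (\<exists>i j a. i < n \<and> j < n \<and> i \<noteq> j \<and> a \<in> A \<and> x i - x j = a)) \<longleftrightarrow> \<not> gen A {..<n} x"
  proof -
    fix x :: "nat \<Rightarrow> real"
    have "(\<exists>i j. i < j \<and> j < n \<and> x i - x j = 0) \<longleftrightarrow> (\<exists>i<n. \<exists>j<n. i \<noteq> j \<and> x i = x j)"
    proof
      assume "\<exists>i j. i < j \<and> j < n \<and> x i - x j = 0"
      then obtain i j where "i < j" "j < n" "x i - x j = 0" by blast
      then show "\<exists>i<n. \<exists>j<n. i \<noteq> j \<and> x i = x j" by (intro exI[of _ i] exI[of _ j]) auto
    next
      assume "\<exists>i<n. \<exists>j<n. i \<noteq> j \<and> x i = x j"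
      then obtain i j where ij: "i < n" "j < n" "i \<noteq> j" "x i = x j" by blast
      show "\<exists>i j. i < j \<and> j < n \<and> x i - x j = 0"
      proof (cases "i < j")
        case True then show ?thesis using ij by (intro exI[of _ i] exI[of _ j]) auto
      next
        case False then show ?thesis using ij by (intro exI[of _ j] exI[of _ i]) auto
      qed
    qed
    then show "?thesis x" unfolding gen_def by auto
  qed
  have "\<Union>(hyperplanes_C n A) = {x \<in> Rn n. ((\<exists>i j. i < j \<and> j < n \<and> x i - x j = 0) \<or>
      (\<exists>i j a. i < n \<and> j < n \<and> i \<noteq> j \<and> a \<in> A \<and> x i - x j = a))}"
    unfolding hyperplanes_C_def Union_Un_distrib h1 h2 by blast
  also have "\<dots> = {x \<in> Rn n. \<not> gen A {..<n} x}" by (simp only: h3)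
  finally have "\<Union>(hyperplanes_C n A) = {x \<in> Rn n. \<not> gen A {..<n} x}" .
  then show ?thesis unfolding UU_def by auto
qed

lemma topspace_YY: "topspace (YY n A) = UU n A"
  unfolding YY_def UU_def using topspace_Euclidean_space[of n] Rn_def by auto

lemma regions_eq: "regions_C n A = connected_components_of (YY n A)"
  unfolding regions_C_def YY_def U_eq ..

lemma cont_coord: "continuous_map (Euclidean_space n) euclideanreal (\<lambda>z. z i)"
  unfolding Euclidean_space_def
  by (rule continuous_map_from_subtopology) (rule continuous_map_product_projection, simp)

lemma cont_diff: "continuous_map (YY n A) euclideanreal (\<lambda>z. z i - z j)"
  unfolding YY_def
  by (intro continuous_map_from_subtopology continuous_map_diff cont_coord)

lemma clopen_half:
  assumes "i < n" "j < n" "i \<noteq> j" "a \<in> insert 0 A"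
  shows "openin (YY n A) {z \<in> UU n A. z i - z j < a}" "closedin (YY n A) {z \<in> UU n A. z i - z j < a}"
proof -
  have "openin (YY n A) {z \<in> topspace (YY n A). z i - z j \<in> {..<a}}"
    by (rule openin_continuous_map_preimage[OF cont_diff]) simp
  then show "openin (YY n A) {z \<in> UU n A. z i - z j < a}" by (simp add: topspace_YY)
  have "closedin (YY n A) {z \<in> topspace (YY n A). z i - z j \<in> {..a}}"
    by (rule closedin_continuous_map_preimage[OF cont_diff]) simp
  moreover have "{z \<in> topspace (YY n A). z i - z j \<in> {..a}} = {z \<in> UU n A. z i - z j < a}"
  proof -
    have "\<And>z. z \<in> UU n A \<Longrightarrow> z i - z j \<noteq> a"
      using assms unfolding UU_def gen_def by auto
    then show ?thesis by (force simp: topspace_YY)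
  qed
  ultimately show "closedin (YY n A) {z \<in> UU n A. z i - z j < a}" by simp
qed

lemma cell_convex:
  assumes x: "x \<in> Cell n A \<tau>" and y: "y \<in> Cell n A \<tau>" and t: "0 \<le> t" "t \<le> 1"
  shows "(\<lambda>k. (1 - t) * x k + t * y k) \<in> Cell n A \<tau>"
proof -
  define z where "z = (\<lambda>k. (1 - t) * x k + t * y k)"
  have tx: "tpe A {..<n} x = \<tau>" and ty: "tpe A {..<n} y = \<tau>" using x y unfolding Cell_def by auto
  have gx: "gen A {..<n} x" and gy: "gen A {..<n} y" using x y unfolding Cell_def UU_def by auto
  have same: "\<And>i j a. i < n \<Longrightarrow> j < n \<Longrightarrow> a \<in> insert 0 A \<Longrightarrow> (x i - x j < a \<longleftrightarrow> y i - y j < a)"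
  proof -
    fix i j a assume "i < n" "j < n" "a \<in> insert 0 A"
    then have "(i,j,a) \<in> tpe A {..<n} x \<longleftrightarrow> (i,j,a) \<in> tpe A {..<n} y" using tx ty by simp
    then show "x i - x j < a \<longleftrightarrow> y i - y j < a" using \<open>i < n\<close> \<open>j < n\<close> \<open>a \<in> insert 0 A\<close>
      unfolding tpe_def by auto
  qed
  have zd: "\<And>i j a. z i - z j - a = (1 - t) * (x i - x j - a) + t * (y i - y j - a)"
    unfolding z_def by (simp add: algebra_simps)
  have key: "\<And>i j a. i < n \<Longrightarrow> j < n \<Longrightarrow> i \<noteq> j \<Longrightarrow> a \<in> insert 0 A \<Longrightarrow>
      (z i - z j < a \<longleftrightarrow> x i - x j < a) \<and> z i - z j \<noteq> a"
  proof -
    fix i j a assume ij: "i < n" "j < n" "i \<noteq> j" "a \<in> insert 0 A"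
    have nx: "x i - x j \<noteq> a" using gx ij unfolding gen_def by (cases "a = 0") auto
    have ny: "y i - y j \<noteq> a" using gy ij unfolding gen_def by (cases "a = 0") auto
    show "(z i - z j < a \<longleftrightarrow> x i - x j < a) \<and> z i - z j \<noteq> a"
    proof (cases "x i - x j < a")
      case True
      then have "y i - y j < a" using same ij by auto
      then have "(1 - t) * (x i - x j - a) \<le> 0" "t * (y i - y j - a) \<le> 0"
        "(1 - t) * (x i - x j - a) < 0 \<or> t * (y i - y j - a) < 0"
        using True t by (auto simp: mult_le_0_iff mult_less_0_iff)
      then have "z i - z j - a < 0" using zd[of i j a] by linarith
      then show ?thesis using True by auto
    next
      case False
      then have "x i - x j > a" using nx by auto
      moreover have "y i - y j > a" using same ij False ny by force
      ultimately have "(1 - t) * (x i - x j - a) \<ge> 0" "t * (y i - y j - a) \<ge> 0"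
        "(1 - t) * (x i - x j - a) > 0 \<or> t * (y i - y j - a) > 0"
        using t by (auto simp: zero_le_mult_iff zero_less_mult_iff)
      then have "z i - z j - a > 0" using zd[of i j a] by linarith
      then show ?thesis using False by auto
    qed
  qed
  have "z \<in> Rn n" using x y unfolding Cell_def UU_def Rn_def z_def by auto
  moreover have "gen A {..<n} z" unfolding gen_def using key by fastforce
  moreover have "tpe A {..<n} z = tpe A {..<n} x"
  proof -
    have "\<And>i j a. (i < n \<and> j < n \<and> a \<in> insert 0 A \<and> z i - z j < a) = (i < n \<and> j < n \<and> a \<in> insert 0 A \<and> x i - x j < a)"
      subgoal for i j a by (cases "i = j") (use key[of i j a] in auto)
      done
    then show ?thesis unfolding tpe_def by simp
  qed
  ultimately show ?thesis using tx unfolding Cell_def UU_def z_def by auto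
qed


lemma cell_sub: "Cell n A \<tau> \<subseteq> UU n A" unfolding Cell_def by auto

lemma cell_connected: "connectedin (YY n A) (Cell n A \<tau>)"
proof (rule path_connectedin_imp_connectedin)
  show "path_connectedin (YY n A) (Cell n A \<tau>)"
    unfolding path_connectedin
  proof (intro conjI ballI)
    show "Cell n A \<tau> \<subseteq> topspace (YY n A)" using cell_sub topspace_YY by auto
    fix x y assume x: "x \<in> Cell n A \<tau>" and y: "y \<in> Cell n A \<tau>"
    define g where "g = (\<lambda>t k. (1 - t) * x k + t * y k)"
    have gC: "g \<in> {0..1} \<rightarrow> Cell n A \<tau>" unfolding g_def using cell_convex[OF x y] by auto
    have "continuous_map (subtopology euclideanreal {0..1}) (powertop_real UNIV) g"
      unfolding continuous_map_componentwise_UNIV g_def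
      by (intro allI continuous_map_from_subtopology continuous_intros)
    moreover have "g ` topspace (subtopology euclideanreal {0..1}) \<subseteq> UU n A"
      using gC cell_sub[of n A \<tau>] by (auto simp: Pi_iff)
    moreover have "UU n A \<subseteq> {x. \<forall>i\<ge>n. x i = 0}" unfolding UU_def Rn_def by auto
    ultimately have "pathin (YY n A) g"
      unfolding pathin_def YY_def Euclidean_space_def continuous_map_in_subtopology by auto
    moreover have "g 0 = x" "g 1 = y" unfolding g_def by auto
    ultimately show "\<exists>g. pathin (YY n A) g \<and> g \<in> {0..1} \<rightarrow> Cell n A \<tau> \<and> g 0 = x \<and> g 1 = y"
      using gC by blast
  qed
qed

lemma comp_eq:
  assumes x: "x \<in> UU n A"
  shows "connected_component_of_set (YY n A) x = Cell n A (tpe A {..<n} x)"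
proof
  have "x \<in> Cell n A (tpe A {..<n} x)" using x unfolding Cell_def by auto
  then show "Cell n A (tpe A {..<n} x) \<subseteq> connected_component_of_set (YY n A) x"
    by (rule connected_component_of_maximal[OF cell_connected])
  show "connected_component_of_set (YY n A) x \<subseteq> Cell n A (tpe A {..<n} x)"
  proof
    fix y assume "y \<in> connected_component_of_set (YY n A) x"
    then obtain T where T: "connectedin (YY n A) T" "x \<in> T" "y \<in> T"
      unfolding connected_component_of_def by auto
    have yU: "y \<in> UU n A" using T connectedin_subset_topspace topspace_YY by blast
    have "tpe A {..<n} y = tpe A {..<n} x"
    proof (rule set_eqI, clarify)
      fix i j a
      show "(i,j,a) \<in> tpe A {..<n} y \<longleftrightarrow> (i,j,a) \<in> tpe A {..<n} x"
      proof (cases "i < n \<and> j < n \<and> i \<noteq> j \<and> a \<in> insert 0 A")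
        case True
        let ?H = "{z \<in> UU n A. z i - z j < a}"
        have "T \<subseteq> ?H \<or> disjnt T ?H"
          using True clopen_half[of i n j a A] connectedin_clopen_cases[OF T(1)] by blast
        then have "y \<in> ?H \<longleftrightarrow> x \<in> ?H" using T(2,3) by (auto simp: disjnt_iff)
        then show ?thesis using x yU unfolding tpe_def by auto
      next
        case False
        then show ?thesis unfolding tpe_def by auto
      qed
    qed
    then show "y \<in> Cell n A (tpe A {..<n} x)" using yU unfolding Cell_def by auto
  qed
qed

lemma regions_cells: "regions_C n A = (\<lambda>x. Cell n A (tpe A {..<n} x)) ` UU n A"
  unfolding regions_eq connected_components_of_def topspace_YY
  using comp_eq by (intro image_cong) auto


lemma sum_apply_fun: "finite S \<Longrightarrow> (\<Sum>s\<in>S. F s) k = (\<Sum>s\<in>S. F s k)"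
  for F :: "'b \<Rightarrow> 'a \<Rightarrow> real"
  by (induction S rule: finite_induct) auto

lemma fscale_apply [simp]: "fscale c x k = c * x k" by (simp add: fscale_def)

definition grp :: "real set \<Rightarrow> nat set \<Rightarrow> (nat \<Rightarrow> real) \<Rightarrow> nat \<Rightarrow> nat set" where
  "grp A I x b = {i\<in>I. x b \<le> x i \<and> (\<forall>c\<in>botx A I x. x b < x c \<longrightarrow> x i < x c)}"

definition gind :: "real set \<Rightarrow> nat set \<Rightarrow> (nat \<Rightarrow> real) \<Rightarrow> nat \<Rightarrow> nat \<Rightarrow> real" where
  "gind A I x b = (\<lambda>k. if k \<in> grp A I x b then 1 else 0)"

definition upp :: "nat set \<Rightarrow> (nat \<Rightarrow> real) \<Rightarrow> nat \<Rightarrow> nat \<Rightarrow> real" where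
  "upp I x b = (\<lambda>k. if k \<in> I \<and> x b \<le> x k then 1 else 0)"

lemma grp_sub: "grp A I x b \<subseteq> I" unfolding grp_def by auto

lemma grp_self: "b \<in> botx A I x \<Longrightarrow> b \<in> grp A I x b"
  unfolding grp_def using botx_subset by auto

lemma grp_unique:
  assumes g: "gen A I x" and b: "b \<in> botx A I x" and c: "c \<in> botx A I x"
    and i: "i \<in> grp A I x b" "i \<in> grp A I x c"
  shows "b = c"
proof (rule ccontr)
  assume "b \<noteq> c"
  moreover have "b \<in> I" "c \<in> I" using b c botx_subset by auto
  ultimately have "x b \<noteq> x c" using g unfolding gen_def by auto
  then have "x b < x c \<or> x c < x b" by auto
  then show False
  proof
    assume "x b < x c"
    then have "x i < x c" using i(1) c unfolding grp_def by auto
    moreover have "x c \<le> x i" using i(2) unfolding grp_def by auto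
    ultimately show False by auto
  next
    assume "x c < x b"
    then have "x i < x b" using i(2) b unfolding grp_def by auto
    moreover have "x b \<le> x i" using i(1) unfolding grp_def by auto
    ultimately show False by auto
  qed
qed

lemma grp_exists:
  assumes fI: "finite I" and i: "i \<in> I"
  shows "\<exists>b\<in>botx A I x. i \<in> grp A I x b"
proof -
  obtain m where m: "m \<in> botx A I x" "\<forall>j\<in>I. x m \<le> x j" using argmin_botx[OF fI] i by blast
  define Bi where "Bi = {c\<in>botx A I x. x c \<le> x i}"
  have fBi: "finite Bi" unfolding Bi_def using finite_botx[OF fI] by auto
  have mBi: "m \<in> Bi" unfolding Bi_def using m i by auto
  have "Max (x ` Bi) \<in> x ` Bi" using fBi mBi by (intro Max_in) auto
  then obtain b where b: "b \<in> Bi" "x b = Max (x ` Bi)" by auto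
  have bmax: "\<forall>c\<in>Bi. x c \<le> x b" using b fBi by simp
  have "i \<in> grp A I x b"
    unfolding grp_def
  proof (intro CollectI conjI ballI impI i)
    show "x b \<le> x i" using b unfolding Bi_def by auto
    fix c assume "c \<in> botx A I x" "x b < x c"
    then show "x i < x c" using bmax unfolding Bi_def by force
  qed
  then show ?thesis using b unfolding Bi_def by auto
qed

lemma sumA_ge:
  fixes A :: "real set"
  assumes fA: "finite A" and Apos: "\<forall>a\<in>A. a > 0"
  shows "0 \<le> (\<Sum>a\<in>A. a)" "\<And>a. a \<in> A \<Longrightarrow> a \<le> (\<Sum>a\<in>A. a)"
proof -
  show "0 \<le> (\<Sum>a\<in>A. a)" using Apos by (intro sum_nonneg) (auto simp: less_imp_le)
  fix a assume "a \<in> A"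
  then show "a \<le> (\<Sum>a\<in>A. a)" using Apos fA by (intro member_le_sum) auto
qed

lemma grp_bound_aux:
  assumes fA: "finite A" and Apos: "\<forall>a\<in>A. a > 0" and fI: "finite I"
    and b: "b \<in> botx A I x"
  shows "i \<in> grp A I x b \<Longrightarrow> x i - x b \<le> real (card {k\<in>I. x b \<le> x k \<and> x k < x i}) * (\<Sum>a\<in>A. a)"
proof (induction "card {k\<in>I. x b \<le> x k \<and> x k < x i}" arbitrary: i rule: less_induct)
  case less
  have S0: "0 \<le> (\<Sum>a\<in>A. a)" and Sa: "\<And>a. a \<in> A \<Longrightarrow> a \<le> (\<Sum>a\<in>A. a)" using sumA_ge[OF fA Apos] by auto
  have iI: "i \<in> I" and bi: "x b \<le> x i" and above: "\<And>c. c \<in> botx A I x \<Longrightarrow> x b < x c \<Longrightarrow> x i < x c"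
    using less.prems unfolding grp_def by auto
  show ?case
  proof (cases "x b = x i")
    case True then show ?thesis using S0 by simp
  next
    case False
    then have bi': "x b < x i" using bi by auto
    have bI: "b \<in> I" using b botx_subset by auto
    have cnt1: "b \<in> {k\<in>I. x b \<le> x k \<and> x k < x i}" using bI bi' by auto
    have fc: "finite {k\<in>I. x b \<le> x k \<and> x k < x i}" using fI by auto
    have "i \<notin> botx A I x" using above bi' by force
    then obtain j a where j: "j \<in> I" "x j < x i" "a \<in> A" "x i - x j < a"
      using iI unfolding botx_def by auto
    show ?thesis
    proof (cases "x j < x b")
      case True
      have "x i - x b < a" using j True by auto
      also have "a \<le> (\<Sum>a\<in>A. a)" using Sa j(3) .
      also have "(\<Sum>a\<in>A. a) \<le> real (card {k\<in>I. x b \<le> x k \<and> x k < x i}) * (\<Sum>a\<in>A. a)"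
      proof -
        have "1 \<le> card {k\<in>I. x b \<le> x k \<and> x k < x i}" using cnt1 fc card_0_eq[OF fc] by fastforce
        then show ?thesis using S0 by (simp add: mult_le_cancel_right1)
      qed
      finally show ?thesis by simp
    next
      case False
      have jg: "j \<in> grp A I x b"
        unfolding grp_def using j False above by force
      have sub: "{k\<in>I. x b \<le> x k \<and> x k < x j} \<subset> {k\<in>I. x b \<le> x k \<and> x k < x i}"
      proof
        show "{k\<in>I. x b \<le> x k \<and> x k < x j} \<subseteq> {k\<in>I. x b \<le> x k \<and> x k < x i}" using j by auto
        have "j \<in> {k\<in>I. x b \<le> x k \<and> x k < x i}" "j \<notin> {k\<in>I. x b \<le> x k \<and> x k < x j}"
          using j False by auto
        then show "{k\<in>I. x b \<le> x k \<and> x k < x j} \<noteq> {k\<in>I. x b \<le> x k \<and> x k < x i}" by blast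
      qed
      have lt: "card {k\<in>I. x b \<le> x k \<and> x k < x j} < card {k\<in>I. x b \<le> x k \<and> x k < x i}"
        by (rule psubset_card_mono[OF fc sub])
      have IH: "x j - x b \<le> real (card {k\<in>I. x b \<le> x k \<and> x k < x j}) * (\<Sum>a\<in>A. a)"
        using less.hyps[OF lt jg] .
      have "x i - x b = (x i - x j) + (x j - x b)" by simp
      also have "\<dots> \<le> (\<Sum>a\<in>A. a) + real (card {k\<in>I. x b \<le> x k \<and> x k < x j}) * (\<Sum>a\<in>A. a)"
        using IH j Sa[OF j(3)] by linarith
      also have "\<dots> = real (card {k\<in>I. x b \<le> x k \<and> x k < x j} + 1) * (\<Sum>a\<in>A. a)" by (simp add: algebra_simps)
      also have "\<dots> \<le> real (card {k\<in>I. x b \<le> x k \<and> x k < x i}) * (\<Sum>a\<in>A. a)"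
        using lt S0 by (intro mult_right_mono) auto
      finally show ?thesis .
    qed
  qed
qed

lemma grp_bound:
  assumes fA: "finite A" and Apos: "\<forall>a\<in>A. a > 0" and fI: "finite I"
    and b: "b \<in> botx A I x" and i: "i \<in> grp A I x b"
  shows "\<bar>x i - x b\<bar> \<le> real (card I) * (\<Sum>a\<in>A. a)"
proof -
  have "x i - x b \<le> real (card {k\<in>I. x b \<le> x k \<and> x k < x i}) * (\<Sum>a\<in>A. a)"
    using grp_bound_aux[OF fA Apos fI b i] .
  also have "\<dots> \<le> real (card I) * (\<Sum>a\<in>A. a)"
    using sumA_ge[OF fA Apos] fI by (intro mult_right_mono) (auto intro: card_mono)
  finally show ?thesis using i unfolding grp_def by auto
qed


lemma tpe_order: "i \<in> I \<Longrightarrow> j \<in> I \<Longrightarrow> (j,i,0) \<in> tpe A I x \<longleftrightarrow> x j < x i"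
  unfolding tpe_def by auto

lemma transfer_order:
  assumes "tpe A I x = tpe A I x0" "i \<in> I" "j \<in> I"
  shows "x j < x i \<longleftrightarrow> x0 j < x0 i"
  using tpe_order[OF assms(2,3), of A x] tpe_order[OF assms(2,3), of A x0] assms(1) by simp

lemma transfer_botx:
  assumes "tpe A I x = tpe A I x0"
  shows "botx A I x = botx A I x0"
  using bots_tpe[of A I x] bots_tpe[of A I x0] assms by simp

lemma transfer_grp:
  assumes e: "tpe A I x = tpe A I x0" and b: "b \<in> I"
  shows "grp A I x b = grp A I x0 b"
proof -
  have o: "\<And>i j. i \<in> I \<Longrightarrow> j \<in> I \<Longrightarrow> x j < x i \<longleftrightarrow> x0 j < x0 i"
    using transfer_order[OF e] by blast
  have bx: "botx A I x = botx A I x0" by (rule transfer_botx[OF e])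
  show ?thesis
    unfolding grp_def bx using o b botx_subset[of A I x0]
    by (auto simp: not_less[symmetric]) (meson subsetD)+
qed

lemma bot_gap:
  assumes Apos: "\<forall>a\<in>A. a > 0" and g: "gen A I x" and b: "b \<in> botx A I x"
    and j: "j \<in> I" "x j < x b" and i: "i \<in> I" "x b \<le> x i" and a: "a \<in> insert 0 A"
  shows "x i - x j > a"
proof (cases "a = 0")
  case True then show ?thesis using j i by auto
next
  case False
  then have aA: "a \<in> A" using a by auto
  have bI: "b \<in> I" using b botx_subset by auto
  have "\<not> x b - x j < a" using b j aA unfolding botx_def by auto
  then have "a \<le> x i - x j" using i by auto
  moreover have "i \<noteq> j" using i j by auto
  then have "x i - x j \<noteq> a" using g i j aA unfolding gen_def by auto
  ultimately show ?thesis by auto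
qed

lemma shift_cell:
  assumes Apos: "\<forall>a\<in>A. a > 0" and x0: "x0 \<in> UU n A" and b: "b \<in> botx A {..<n} x0" and t: "0 \<le> t"
  shows "(\<lambda>k. x0 k + t * upp {..<n} x0 b k) \<in> Cell n A (tpe A {..<n} x0)"
proof -
  define u where "u = upp {..<n} x0 b"
  define x' where "x' = (\<lambda>k. x0 k + t * u k)"
  have g: "gen A {..<n} x0" using x0 unfolding UU_def by auto
  have bI: "b < n" using b botx_subset by auto
  have key: "\<And>i j a. i < n \<Longrightarrow> j < n \<Longrightarrow> i \<noteq> j \<Longrightarrow> a \<in> insert 0 A \<Longrightarrow>
      (x' i - x' j < a \<longleftrightarrow> x0 i - x0 j < a) \<and> x' i - x' j \<noteq> a"
  proof -
    fix i j a assume ij: "i < n" "j < n" "i \<noteq> j" "a \<in> insert 0 A"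
    have n0: "x0 i - x0 j \<noteq> a" using g ij unfolding gen_def by (cases "a = 0") auto
    have a0: "0 \<le> a" using ij(4) Apos by force
    show "(x' i - x' j < a \<longleftrightarrow> x0 i - x0 j < a) \<and> x' i - x' j \<noteq> a"
    proof (cases "x0 b \<le> x0 i")
      case True
      show ?thesis
      proof (cases "x0 b \<le> x0 j")
        case True
        then show ?thesis using \<open>x0 b \<le> x0 i\<close> ij n0 unfolding x'_def u_def upp_def by auto
      next
        case False
        then have "x0 i - x0 j > a" using bot_gap[OF Apos g b, of j i a] ij \<open>x0 b \<le> x0 i\<close> by auto
        moreover have "x' i - x' j = x0 i - x0 j + t" using \<open>x0 b \<le> x0 i\<close> False ij
          unfolding x'_def u_def upp_def by auto
        ultimately show ?thesis using t by auto
      qed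
    next
      case False
      show ?thesis
      proof (cases "x0 b \<le> x0 j")
        case True
        then have "x0 j - x0 i > 0" using bot_gap[OF Apos g b, of i j 0] ij False by auto
        moreover have "x' i - x' j = x0 i - x0 j - t" using \<open>\<not> x0 b \<le> x0 i\<close> True ij
          unfolding x'_def u_def upp_def by auto
        ultimately show ?thesis using t a0 by auto
      next
        case False
        then show ?thesis using \<open>\<not> x0 b \<le> x0 i\<close> ij n0 unfolding x'_def u_def upp_def by auto
      qed
    qed
  qed
  have "x' \<in> Rn n" using x0 unfolding x'_def u_def upp_def UU_def Rn_def by auto
  moreover have "gen A {..<n} x'" unfolding gen_def using key by fastforce
  moreover have "tpe A {..<n} x' = tpe A {..<n} x0"
  proof -
    have "\<And>i j a. (i < n \<and> j < n \<and> a \<in> insert 0 A \<and> x' i - x' j < a) = (i < n \<and> j < n \<and> a \<in> insert 0 A \<and> x0 i - x0 j < a)"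
      subgoal for i j a by (cases "i = j") (use key[of i j a] in auto)
      done
    then show ?thesis unfolding tpe_def by simp
  qed
  ultimately show ?thesis unfolding Cell_def UU_def x'_def u_def by auto
qed


lemma Rn_subspace: "V.subspace (Rn n)"
  unfolding V.subspace_def Rn_def by (auto simp: fscale_def)

lemma gind_at_bot:
  assumes g: "gen A I x" and b: "b \<in> botx A I x" and c: "c \<in> botx A I x"
  shows "gind A I x c b = (if c = b then 1 else 0)"
  using grp_self[OF b] grp_unique[OF g b c] unfolding gind_def by auto

lemma gind_inj:
  assumes g: "gen A I x"
  shows "inj_on (gind A I x) (botx A I x)"
proof (rule inj_onI)
  fix b c assume b: "b \<in> botx A I x" and c: "c \<in> botx A I x" and e: "gind A I x b = gind A I x c"
  have "gind A I x b b = 1" using gind_at_bot[OF g b b] by simp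
  then have "gind A I x c b = 1" using e by simp
  then show "b = c" using gind_at_bot[OF g b(1) c(1)] by (auto split: if_splits)
qed

lemma gind_indep:
  assumes g: "gen A I x" and fI: "finite I"
  shows "V.independent (gind A I x ` botx A I x)"
proof (rule V.independent_if_scalars_zero)
  let ?G = "gind A I x ` botx A I x"
  show fG: "finite ?G" using finite_botx[OF fI] by simp
  fix f w assume s: "(\<Sum>v\<in>?G. fscale (f v) v) = 0" and w: "w \<in> ?G"
  then obtain b where b: "b \<in> botx A I x" "w = gind A I x b" by auto
  have val: "\<And>v. v \<in> ?G \<Longrightarrow> v b = (if v = w then 1 else 0)"
  proof -
    fix v assume "v \<in> ?G"
    then obtain c where c: "c \<in> botx A I x" "v = gind A I x c" by auto
    show "v b = (if v = w then 1 else 0)"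
    proof (cases "c = b")
      case True then show ?thesis using c b gind_at_bot[OF g b(1) b(1)] by simp
    next
      case False
      then have "v b = 0" using c gind_at_bot[OF g b(1) c(1)] by simp
      moreover have "w b = 1" using b gind_at_bot[OF g b(1) b(1)] by simp
      ultimately show ?thesis by auto
    qed
  qed
  have "0 = (\<Sum>v\<in>?G. fscale (f v) v) b" using s by simp
  also have "\<dots> = (\<Sum>v\<in>?G. f v * v b)" using fG by (simp add: sum_apply_fun)
  also have "\<dots> = (\<Sum>v\<in>?G. if v = w then f v else 0)"
  proof (rule sum.cong[OF refl])
    fix v assume "v \<in> ?G"
    then show "f v * v b = (if v = w then f v else 0)" using val[of v] by simp
  qed
  also have "\<dots> = f w" using fG w by simp
  finally show "f w = 0" by simp
qed

lemma L2_le_sum_bound: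
  assumes "\<And>k. k < n \<Longrightarrow> \<bar>f k\<bar> \<le> D"
  shows "sqrt (\<Sum>k<n. (f k)^2) \<le> real n * D"
proof -
  have "sqrt (\<Sum>k<n. (f k)^2) = L2_set f {..<n}" unfolding L2_set_def by simp
  also have "\<dots> \<le> (\<Sum>k<n. \<bar>f k\<bar>)" by (rule L2_set_le_sum_abs)
  also have "\<dots> \<le> (\<Sum>k<n. D)" using assms by (intro sum_mono) auto
  finally show ?thesis by simp
qed

lemma level_upper:
  assumes fA: "finite A" and Apos: "\<forall>a\<in>A. a > 0" and x0: "x0 \<in> UU n A"
  shows "within_level n (card (botx A {..<n} x0)) (Cell n A (tpe A {..<n} x0))"
proof -
  define I where "I = {..<n::nat}"
  define B where "B = botx A I x0"
  define G where "G = gind A I x0 ` B"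
  define W where "W = V.span G"
  define r where "r = real n * (real n * (\<Sum>a\<in>A. a)) + 1"
  have g0: "gen A I x0" using x0 unfolding UU_def I_def by auto
  have fI: "finite I" unfolding I_def by simp
  have GR1: "\<And>b. gind A I x0 b \<in> Rn n"
  proof -
    fix b
    have "\<And>i. i \<ge> n \<Longrightarrow> i \<notin> grp A I x0 b" using grp_sub[of A I x0 b] unfolding I_def by auto
    then show "gind A I x0 b \<in> Rn n" unfolding gind_def Rn_def by auto
  qed
  have GR: "G \<subseteq> Rn n" unfolding G_def using GR1 by auto
  have WR: "W \<subseteq> Rn n" unfolding W_def by (rule V.span_minimal[OF GR Rn_subspace])
  have sW: "V.subspace W" unfolding W_def by simp
  have dW: "V.dim W = card B"
  proof -
    have "V.dim W = card G" unfolding W_def by (rule V.dim_span_eq_card_independent) (use gind_indep[OF g0 fI] in \<open>simp add: G_def B_def\<close>)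
    also have "\<dots> = card B" unfolding G_def B_def by (rule card_image[OF gind_inj[OF g0]])
    finally show ?thesis .
  qed
  have S0: "0 \<le> (\<Sum>a\<in>A. a)" using sumA_ge[OF fA Apos] by simp
  have r0: "r > 0" unfolding r_def using S0 by (simp add: add_nonneg_pos)
  have cov: "Cell n A (tpe A {..<n} x0) \<subseteq> {x \<in> Rn n. \<exists>y\<in>W. edist n x y \<le> r}"
  proof
    fix x assume xc: "x \<in> Cell n A (tpe A {..<n} x0)"
    have xR: "x \<in> Rn n" and te: "tpe A I x = tpe A I x0" using xc unfolding Cell_def UU_def I_def by auto
    define y where "y = (\<Sum>b\<in>B. fscale (x b) (gind A I x0 b))"
    have yW: "y \<in> W" unfolding y_def W_def G_def
    proof (rule V.span_sum)
      fix b assume "b \<in> B"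
      then show "fscale (x b) (gind A I x0 b) \<in> V.span (gind A I x0 ` B)"
        by (intro V.span_scale V.span_base imageI)
    qed
    have fB: "finite B" unfolding B_def using finite_botx[OF fI] .
    have bnd: "\<And>k. k < n \<Longrightarrow> \<bar>x k - y k\<bar> \<le> real n * (\<Sum>a\<in>A. a)"
    proof -
      fix k assume k: "k < n"
      then have kI: "k \<in> I" unfolding I_def by simp
      obtain \<beta> where \<beta>: "\<beta> \<in> B" "k \<in> grp A I x0 \<beta>" using grp_exists[OF fI kI] unfolding B_def by blast
      have gv: "gind A I x0 b k = (if b = \<beta> then 1 else 0)" if bB: "b \<in> B" for b
      proof (cases "b = \<beta>")
        case True then show ?thesis using \<beta>(2) unfolding gind_def by simp
      next
        case False
        have "k \<notin> grp A I x0 b"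
        proof
          assume "k \<in> grp A I x0 b"
          then have "b = \<beta>" using grp_unique[OF g0 bB[unfolded B_def] \<beta>(1)[unfolded B_def] _ \<beta>(2)] by blast
          then show False using False by simp
        qed
        then show ?thesis using False unfolding gind_def by simp
      qed
      have "y k = (\<Sum>b\<in>B. x b * gind A I x0 b k)" unfolding y_def using fB by (simp add: sum_apply_fun)
      also have "\<dots> = (\<Sum>b\<in>B. if b = \<beta> then x b else 0)"
      proof (rule sum.cong[OF refl])
        fix b assume "b \<in> B"
        then show "x b * gind A I x0 b k = (if b = \<beta> then x b else 0)" using gv[of b] by simp
      qed
      also have "\<dots> = x \<beta>" using fB \<beta>(1) by simp
      finally have yk: "y k = x \<beta>" .
      have \<beta>I: "\<beta> \<in> I" using \<beta>(1) botx_subset unfolding B_def by auto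
      have "\<beta> \<in> botx A I x" using \<beta>(1) transfer_botx[OF te] unfolding B_def by simp
      moreover have "k \<in> grp A I x \<beta>" using \<beta>(2) transfer_grp[OF te \<beta>I] by simp
      ultimately have "\<bar>x k - x \<beta>\<bar> \<le> real (card I) * (\<Sum>a\<in>A. a)" by (rule grp_bound[OF fA Apos fI])
      then show "\<bar>x k - y k\<bar> \<le> real n * (\<Sum>a\<in>A. a)" using yk unfolding I_def by simp
    qed
    have "edist n x y \<le> real n * (real n * (\<Sum>a\<in>A. a))"
      unfolding edist_def by (rule L2_le_sum_bound[OF bnd])
    then have "edist n x y \<le> r" unfolding r_def by simp
    then show "x \<in> {x \<in> Rn n. \<exists>y\<in>W. edist n x y \<le> r}" using xR yW by auto
  qed
  have dW': "V.dim W = card (botx A {..<n} x0)" using dW unfolding B_def I_def .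
  show ?thesis unfolding within_level_def
    by (intro exI[of _ W] exI[of _ r] conjI WR sW dW' r0 cov)
qed


definition ee :: "nat \<Rightarrow> nat \<Rightarrow> real" where "ee k = (\<lambda>j. if j = k then 1 else 0)"

lemma Rn_expand: "z \<in> Rn n \<Longrightarrow> z = (\<Sum>k<n. fscale (z k) (ee k))"
proof (rule ext)
  fix j assume z: "z \<in> Rn n"
  have "(\<Sum>k<n. fscale (z k) (ee k)) j = (\<Sum>k<n. z k * ee k j)" by (simp add: sum_apply_fun)
  also have "\<dots> = (\<Sum>k<n. if j = k then z k else 0)" unfolding ee_def by (intro sum.cong) auto
  also have "\<dots> = (if j \<in> {..<n} then z j else 0)" by simp
  also have "\<dots> = z j" using z unfolding Rn_def by auto
  finally show "z j = (\<Sum>k<n. fscale (z k) (ee k)) j" by simp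
qed

lemma Rn_span: "Rn n \<subseteq> V.span (ee ` {..<n})"
proof
  fix z assume z: "z \<in> Rn n"
  have "(\<Sum>k<n. fscale (z k) (ee k)) \<in> V.span (ee ` {..<n})"
  proof (rule V.span_sum)
    fix k assume "k \<in> {..<n}"
    then show "fscale (z k) (ee k) \<in> V.span (ee ` {..<n})" by (intro V.span_scale V.span_base imageI)
  qed
  then show "z \<in> V.span (ee ` {..<n})" using Rn_expand[OF z] by simp
qed

interpretation VP: vector_space_pair fscale "scaleR :: real \<Rightarrow> real \<Rightarrow> real"
  by unfold_locales (auto simp: fscale_def fun_eq_iff algebra_simps)

lemma lin_bound:
  assumes lin: "Vector_Spaces.linear fscale scaleR \<phi>" and z: "z \<in> Rn n"
  shows "\<bar>\<phi> z\<bar> \<le> (\<Sum>k<n. \<bar>\<phi> (ee k)\<bar>) * sqrt (\<Sum>k<n. (z k)^2)"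
proof -
  interpret L: Vector_Spaces.linear fscale "scaleR :: real \<Rightarrow> real \<Rightarrow> real" \<phi> by (rule lin)
  define N where "N = sqrt (\<Sum>k<n. (z k)^2)"
  have zk: "\<And>k. k < n \<Longrightarrow> \<bar>z k\<bar> \<le> N"
  proof -
    fix k assume "k < n"
    then have "\<bar>z k\<bar> \<le> L2_set (\<lambda>k. \<bar>z k\<bar>) {..<n}" by (intro member_le_L2_set) auto
    also have "\<dots> = N" unfolding L2_set_def N_def by simp
    finally show "\<bar>z k\<bar> \<le> N" .
  qed
  have "\<phi> z = \<phi> (\<Sum>k<n. fscale (z k) (ee k))" using Rn_expand[OF z] by simp
  also have "\<dots> = (\<Sum>k<n. z k * \<phi> (ee k))" by (simp add: L.sum L.scale)
  finally have "\<bar>\<phi> z\<bar> = \<bar>\<Sum>k<n. z k * \<phi> (ee k)\<bar>" by simp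
  also have "\<dots> \<le> (\<Sum>k<n. \<bar>z k\<bar> * \<bar>\<phi> (ee k)\<bar>)" by (rule order_trans[OF sum_abs]) (simp add: abs_mult)
  also have "\<dots> \<le> (\<Sum>k<n. N * \<bar>\<phi> (ee k)\<bar>)" using zk by (intro sum_mono mult_right_mono) auto
  also have "\<dots> = (\<Sum>k<n. \<bar>\<phi> (ee k)\<bar>) * N" by (simp add: sum_distrib_left mult.commute)
  finally show ?thesis unfolding N_def .
qed


lemma upp_decomp:
  assumes g: "gen A I x" and fI: "finite I" and bs: "bs \<in> botx A I x"
  shows "upp I x bs = (\<Sum>c\<in>{c\<in>botx A I x. x bs \<le> x c}. gind A I x c)"
proof (rule ext)
  fix k
  let ?Bu = "{c\<in>botx A I x. x bs \<le> x c}"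
  have fBu: "finite ?Bu" using finite_botx[OF fI] by auto
  have "(\<Sum>c\<in>?Bu. gind A I x c) k = (\<Sum>c\<in>?Bu. gind A I x c k)" using fBu by (simp add: sum_apply_fun)
  also have "\<dots> = upp I x bs k"
  proof (cases "k \<in> I")
    case False
    have "\<And>c. gind A I x c k = 0" using False grp_sub[of A I x] unfolding gind_def by auto
    then show ?thesis using False unfolding upp_def by simp
  next
    case True
    obtain \<beta> where \<beta>: "\<beta> \<in> botx A I x" "k \<in> grp A I x \<beta>" using grp_exists[OF fI True] by blast
    have gv: "gind A I x c k = (if c = \<beta> then 1 else 0)" if cB: "c \<in> botx A I x" for c
    proof (cases "c = \<beta>")
      case True then show ?thesis using \<beta>(2) unfolding gind_def by simp
    next
      case False
      have "k \<notin> grp A I x c"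
      proof
        assume "k \<in> grp A I x c"
        then have "c = \<beta>" using grp_unique[OF g cB \<beta>(1) _ \<beta>(2)] by blast
        then show False using False by simp
      qed
      then show ?thesis using False unfolding gind_def by simp
    qed
    have "(\<Sum>c\<in>?Bu. gind A I x c k) = (\<Sum>c\<in>?Bu. if c = \<beta> then 1 else 0)"
    proof (rule sum.cong[OF refl])
      fix c assume "c \<in> ?Bu"
      then show "gind A I x c k = (if c = \<beta> then 1 else 0)" using gv[of c] by simp
    qed
    also have "\<dots> = (if \<beta> \<in> ?Bu then 1 else 0)" using fBu by simp
    also have "\<dots> = upp I x bs k"
    proof -
      have k1: "x \<beta> \<le> x k" and k2: "\<And>c. c \<in> botx A I x \<Longrightarrow> x \<beta> < x c \<Longrightarrow> x k < x c"
        using \<beta>(2) unfolding grp_def by auto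
      have "x bs \<le> x k \<longleftrightarrow> x bs \<le> x \<beta>"
      proof
        assume h: "x bs \<le> x k"
        show "x bs \<le> x \<beta>"
        proof (rule ccontr)
          assume "\<not> x bs \<le> x \<beta>"
          then have "x k < x bs" using k2[OF bs] by auto
          then show False using h by auto
        qed
      next
        assume "x bs \<le> x \<beta>" then show "x bs \<le> x k" using k1 by auto
      qed
      then show ?thesis using True \<beta>(1) unfolding upp_def by auto
    qed
    finally show ?thesis .
  qed
  finally show "upp I x bs k = (\<Sum>c\<in>?Bu. gind A I x c) k" by simp
qed

lemma level_lower:
  assumes fA: "finite A" and Apos: "\<forall>a\<in>A. a > 0" and x0: "x0 \<in> UU n A"
    and wl: "within_level n l (Cell n A (tpe A {..<n} x0))"
  shows "card (botx A {..<n} x0) \<le> l"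
proof (rule ccontr)
  define I where "I = {..<n::nat}"
  define B where "B = botx A I x0"
  define G where "G = gind A I x0 ` B"
  assume "\<not> card (botx A {..<n} x0) \<le> l"
  then have lB: "l < card B" unfolding B_def I_def by simp
  have g0: "gen A I x0" using x0 unfolding UU_def I_def by auto
  have fI: "finite I" unfolding I_def by simp
  have fB: "finite B" unfolding B_def using finite_botx[OF fI] .
  obtain W r where Wr: "W \<subseteq> Rn n \<and> V.subspace W \<and> V.dim W = l \<and> r > 0 \<and>
      Cell n A (tpe A {..<n} x0) \<subseteq> {x \<in> Rn n. \<exists>y\<in>W. edist n x y \<le> r}"
    using wl unfolding within_level_def by blast
  have WR: "W \<subseteq> Rn n" and sW: "V.subspace W" and dW: "V.dim W = l" and r0: "r > 0"
    and cov: "Cell n A (tpe A {..<n} x0) \<subseteq> {x \<in> Rn n. \<exists>y\<in>W. edist n x y \<le> r}"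
    using Wr by auto
  obtain Bw where Bw: "Bw \<subseteq> W" "V.independent Bw" "W \<subseteq> V.span Bw" "card Bw = V.dim W"
    by (rule V.basis_exists)
  have fBw: "finite Bw"
    using V.independent_span_bound[OF _ Bw(2), of "ee ` {..<n}"] Bw(1) WR Rn_span by blast
  have iG: "V.independent G" unfolding G_def B_def using gind_indep[OF g0 fI] .
  have cG: "card G = card B" unfolding G_def B_def by (rule card_image[OF gind_inj[OF g0]])
  have "\<not> G \<subseteq> W"
  proof
    assume "G \<subseteq> W"
    then have "G \<subseteq> V.span Bw" using Bw(3) by auto
    then have "card G \<le> card Bw" using V.independent_span_bound[OF fBw iG] by blast
    then show False using cG Bw(4) dW lB by simp
  qed
  then obtain b where bB: "b \<in> B" and bW: "gind A I x0 b \<notin> W" unfolding G_def by auto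
  have spW: "V.span Bw = W" by (rule V.span_subspace[OF Bw(1) Bw(3) sW])
  have ind2: "V.independent (insert (gind A I x0 b) Bw)"
    using V.independent_insertI[of "gind A I x0 b" Bw] bW spW Bw(2) by simp
  obtain \<phi> where lin: "Vector_Spaces.linear fscale scaleR \<phi>"
    and \<phi>v: "\<forall>v\<in>insert (gind A I x0 b) Bw. \<phi> v = (if v = gind A I x0 b then 1 else (0::real))"
    using VP.linear_independent_extend[OF ind2, of "\<lambda>v. if v = gind A I x0 b then 1 else 0"] by blast
  interpret L: Vector_Spaces.linear fscale "scaleR :: real \<Rightarrow> real \<Rightarrow> real" \<phi> by (rule lin)
  have \<phi>Bw: "\<And>v. v \<in> Bw \<Longrightarrow> \<phi> v = 0" using \<phi>v Bw(1) bW by auto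
  have \<phi>W: "\<And>w. w \<in> W \<Longrightarrow> \<phi> w = 0"
  proof -
    fix w assume "w \<in> W"
    then have "w \<in> V.span Bw" using spW by simp
    then show "\<phi> w = 0" using VP.linear_eq_0_on_span[OF lin, of Bw w] \<phi>Bw by blast
  qed
  have \<phi>b: "\<phi> (gind A I x0 b) = 1" using \<phi>v by simp
  define Bn where "Bn = {c\<in>B. \<phi> (gind A I x0 c) \<noteq> 0}"
  have fBn: "finite Bn" unfolding Bn_def using fB by simp
  have bBn: "b \<in> Bn" unfolding Bn_def using bB \<phi>b by simp
  have "Max (x0 ` Bn) \<in> x0 ` Bn" using fBn bBn by (intro Max_in) auto
  then obtain bs where bs: "bs \<in> Bn" "x0 bs = Max (x0 ` Bn)" by auto
  have bsmax: "\<And>c. c \<in> Bn \<Longrightarrow> x0 c \<le> x0 bs" using bs fBn by simp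
  have bsB: "bs \<in> botx A I x0" using bs(1) unfolding Bn_def B_def by simp
  define u where "u = upp I x0 bs"
  define Bu where "Bu = {c\<in>B. x0 bs \<le> x0 c}"
  have fBu: "finite Bu" unfolding Bu_def using fB by simp
  have ud: "u = (\<Sum>c\<in>Bu. gind A I x0 c)" unfolding u_def Bu_def B_def by (rule upp_decomp[OF g0 fI bsB])
  have \<phi>u: "\<phi> u = \<phi> (gind A I x0 bs)"
  proof -
    have "\<phi> u = (\<Sum>c\<in>Bu. \<phi> (gind A I x0 c))" unfolding ud by (simp add: L.sum)
    also have "\<dots> = (\<Sum>c\<in>Bu. if c = bs then \<phi> (gind A I x0 c) else 0)"
    proof (rule sum.cong[OF refl])
      fix c assume c: "c \<in> Bu"
      show "\<phi> (gind A I x0 c) = (if c = bs then \<phi> (gind A I x0 c) else 0)"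
      proof (cases "c = bs")
        case False
        have "c \<in> I" "bs \<in> I" using c bsB botx_subset unfolding Bu_def B_def by auto
        then have "x0 c \<noteq> x0 bs" using g0 False unfolding gen_def by auto
        then have "x0 bs < x0 c" using c unfolding Bu_def by auto
        then have "c \<notin> Bn" using bsmax by force
        then show ?thesis using c False unfolding Bn_def Bu_def by auto
      qed simp
    qed
    also have "\<dots> = \<phi> (gind A I x0 bs)" using fBu bs(1) unfolding Bu_def Bn_def by simp
    finally show ?thesis .
  qed
  have cu: "\<phi> u \<noteq> 0" using \<phi>u bs(1) unfolding Bn_def by simp
  define C where "C = (\<Sum>k<n. \<bar>\<phi> (ee k)\<bar>)"
  have C0: "C \<ge> 0" unfolding C_def by (simp add: sum_nonneg)
  define t where "t = (C * r + \<bar>\<phi> x0\<bar> + 1) / \<bar>\<phi> u\<bar>"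
  have t0: "t \<ge> 0" unfolding t_def using C0 r0 by simp
  have tu: "t * \<bar>\<phi> u\<bar> = C * r + \<bar>\<phi> x0\<bar> + 1" unfolding t_def using cu by simp
  define xt where "xt = (\<lambda>k. x0 k + t * u k)"
  have xtC: "xt \<in> Cell n A (tpe A {..<n} x0)"
    unfolding xt_def u_def I_def using shift_cell[OF Apos x0 bsB[unfolded I_def] t0] .
  then obtain y where xtR: "xt \<in> Rn n" and yW: "y \<in> W" and ed: "edist n xt y \<le> r" using cov by blast
  have yR: "y \<in> Rn n" using yW WR by auto
  have zR: "xt - y \<in> Rn n" using xtR yR unfolding Rn_def by auto
  have x0R: "x0 \<in> Rn n" using x0 unfolding UU_def by auto
  have xte: "xt = x0 + fscale t u" unfolding xt_def by (simp add: fun_eq_iff fscale_def)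
  have "\<phi> (xt - y) = \<phi> x0 + t * \<phi> u" using \<phi>W[OF yW] by (simp add: xte L.diff L.add L.scale)
  moreover have "\<bar>\<phi> (xt - y)\<bar> \<le> C * r"
  proof -
    have "\<bar>\<phi> (xt - y)\<bar> \<le> C * sqrt (\<Sum>k<n. ((xt - y) k)^2)" unfolding C_def by (rule lin_bound[OF lin zR])
    also have "sqrt (\<Sum>k<n. ((xt - y) k)^2) = edist n xt y" unfolding edist_def by simp
    finally show ?thesis using ed C0 by (meson mult_left_mono order_trans)
  qed
  moreover have "\<bar>\<phi> x0 + t * \<phi> u\<bar> \<ge> t * \<bar>\<phi> u\<bar> - \<bar>\<phi> x0\<bar>"
    using t0 by (simp add: abs_mult)
  ultimately show False using tu by linarith
qed

lemma level_cell:
  assumes fA: "finite A" and Apos: "\<forall>a\<in>A. a > 0" and x0: "x0 \<in> UU n A"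
  shows "level n (Cell n A (tpe A {..<n} x0)) = card (botx A {..<n} x0)"
  unfolding level_def
proof (rule Least_equality)
  show "within_level n (card (botx A {..<n} x0)) (Cell n A (tpe A {..<n} x0))"
    by (rule level_upper[OF fA Apos x0])
  fix y assume "within_level n y (Cell n A (tpe A {..<n} x0))"
  then show "card (botx A {..<n} x0) \<le> y" by (rule level_lower[OF fA Apos x0])
qed


lemma sum_Pow_card:
  fixes f :: "nat \<Rightarrow> nat"
  assumes "finite I"
  shows "(\<Sum>T\<in>Pow I. f (card T)) = (\<Sum>k\<le>card I. (card I choose k) * f k)"
proof -
  have "(\<Sum>T\<in>Pow I. f (card T)) = (\<Sum>k\<in>{..card I}. \<Sum>T\<in>{T \<in> Pow I. card T = k}. f (card T))"
    using assms by (intro sum.group[symmetric]) (auto intro: card_mono)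
  also have "\<dots> = (\<Sum>k\<le>card I. (card I choose k) * f k)"
  proof (rule sum.cong[OF refl])
    fix k
    have "(\<Sum>T\<in>{T \<in> Pow I. card T = k}. f (card T)) = (\<Sum>T\<in>{T \<in> Pow I. card T = k}. f k)"
      by (rule sum.cong) auto
    also have "\<dots> = card {T \<in> Pow I. card T = k} * f k" by simp
    also have "card {T \<in> Pow I. card T = k} = card I choose k"
      using n_subsets[OF assms, of k] by (simp add: Pow_def)
    finally show "(\<Sum>T\<in>{T \<in> Pow I. card T = k}. f (card T)) = (card I choose k) * f k" .
  qed
  finally show ?thesis .
qed

lemma fps_pow_from_rec:
  fixes N :: "nat \<Rightarrow> nat \<Rightarrow> nat"
  assumes N0: "\<And>n. N 0 n = (if n = 0 then 1 else 0)"
    and Nrec: "\<And>l n. l \<ge> 1 \<Longrightarrow> N l n = (\<Sum>k\<le>n. (n choose k) * (N 1 k * N (l - 1) (n - k)))"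
  shows "Abs_fps (\<lambda>n. of_nat (N l n) / fact n :: real) = Abs_fps (\<lambda>n. of_nat (N 1 n) / fact n) ^ l"
proof (induction l)
  case 0
  show ?case by (rule fps_ext) (simp add: N0)
next
  case (Suc l)
  have "Abs_fps (\<lambda>n. of_nat (N 1 n) / fact n :: real) ^ Suc l
      = Abs_fps (\<lambda>n. of_nat (N 1 n) / fact n) * Abs_fps (\<lambda>n. of_nat (N l n) / fact n)"
    using Suc.IH by simp
  also have "\<dots> = Abs_fps (\<lambda>n. of_nat (N (Suc l) n) / fact n)"
  proof (rule fps_ext)
    fix n
    have "fps_nth (Abs_fps (\<lambda>n. of_nat (N 1 n) / fact n :: real) * Abs_fps (\<lambda>n. of_nat (N l n) / fact n)) n
        = (\<Sum>i=0..n. of_nat (N 1 i) / fact i * (of_nat (N l (n - i)) / fact (n - i)))"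
      by (simp add: fps_mult_nth)
    also have "\<dots> = (\<Sum>i\<le>n. of_nat ((n choose i) * (N 1 i * N l (n - i))) / fact n)"
    proof (rule sum.cong)
      show "{0..n} = {..n}" by auto
      fix i assume "i \<in> {..n}"
      then have "i \<le> n" by simp
      then show "of_nat (N 1 i) / fact i * (of_nat (N l (n - i)) / fact (n - i)) =
           (of_nat ((n choose i) * (N 1 i * N l (n - i))) / fact n :: real)"
        by (simp add: binomial_fact field_simps)
    qed
    also have "\<dots> = of_nat (N (Suc l) n) / fact n"
      by (simp add: Nrec[of "Suc l" n] sum_divide_distrib[symmetric])
    finally show "fps_nth (Abs_fps (\<lambda>n. of_nat (N 1 n) / fact n :: real) * Abs_fps (\<lambda>n. of_nat (N l n) / fact n)) n
        = fps_nth (Abs_fps (\<lambda>n. of_nat (N (Suc l) n) / fact n)) n" by simp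
  qed
  finally show ?case by simp
qed


lemma r_level_eq:
  assumes fA: "finite A" and Apos: "\<forall>a\<in>A. a > 0"
  shows "r_level l n A = card (TL A l {..<n})"
proof -
  define I where "I = {..<n::nat}"
  have ext: "\<exists>x'. x' \<in> UU n A \<and> tpe A I x' = tpe A I x \<and> botx A I x' = botx A I x"
    if g: "gen A I x" for x
  proof -
    define x' where "x' = (\<lambda>k. if k < n then x k else 0)"
    have eq: "\<And>k. k \<in> I \<Longrightarrow> x' k = x k" unfolding x'_def I_def by simp
    have "x' \<in> Rn n" unfolding x'_def Rn_def by simp
    moreover have "gen A I x'" using gen_cong[of I x' x A, OF eq] g by simp
    ultimately show ?thesis using tpe_cong[of I x' x A, OF eq] botx_cong[of I x' x A, OF eq]
      unfolding UU_def I_def by (intro exI[of _ x']) auto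
  qed
  have set_eq: "{R \<in> regions_C n A. level n R = l} = Cell n A ` TL A l I"
  proof
    show "{R \<in> regions_C n A. level n R = l} \<subseteq> Cell n A ` TL A l I"
    proof
      fix R assume "R \<in> {R \<in> regions_C n A. level n R = l}"
      then obtain x where x: "x \<in> UU n A" "R = Cell n A (tpe A I x)" "level n R = l"
        unfolding regions_cells I_def by auto
      have "card (botx A I x) = l" using x level_cell[OF fA Apos x(1)] unfolding I_def by simp
      moreover have "gen A I x" using x(1) unfolding UU_def I_def by simp
      ultimately have "tpe A I x \<in> TL A l I" unfolding TL_def by blast
      then show "R \<in> Cell n A ` TL A l I" using x(2) by blast
    qed
    show "Cell n A ` TL A l I \<subseteq> {R \<in> regions_C n A. level n R = l}"
    proof
      fix R assume "R \<in> Cell n A ` TL A l I"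
      then obtain x where x: "gen A I x" "card (botx A I x) = l" "R = Cell n A (tpe A I x)"
        unfolding TL_def by auto
      obtain x' where x': "x' \<in> UU n A" "tpe A I x' = tpe A I x" "botx A I x' = botx A I x"
        using ext[OF x(1)] by blast
      have Rx: "R = Cell n A (tpe A {..<n} x')" using x(3) x'(2) unfolding I_def by simp
      moreover have "R \<in> regions_C n A" unfolding regions_cells using x'(1) Rx by blast
      moreover have "level n R = l" using level_cell[OF fA Apos x'(1)] x'(3) x(2) x(3) x'(2)
        unfolding I_def by simp
      ultimately show "R \<in> {R \<in> regions_C n A. level n R = l}" by blast
    qed
  qed
  have inj: "inj_on (Cell n A) (TL A l I)"
  proof (rule inj_onI)
    fix \<tau>1 \<tau>2 assume t1: "\<tau>1 \<in> TL A l I" and t2: "\<tau>2 \<in> TL A l I" and e: "Cell n A \<tau>1 = Cell n A \<tau>2"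
    obtain x where x: "gen A I x" "\<tau>1 = tpe A I x" using t1 unfolding TL_def by auto
    obtain x' where x': "x' \<in> UU n A" "tpe A I x' = tpe A I x" using ext[OF x(1)] by blast
    have "x' \<in> Cell n A \<tau>1" using x' x(2) unfolding Cell_def I_def by simp
    then have "x' \<in> Cell n A \<tau>2" using e by simp
    then have "\<tau>2 = tpe A I x'" unfolding Cell_def I_def by simp
    then show "\<tau>1 = \<tau>2" using x(2) x'(2) by simp
  qed
  show ?thesis unfolding r_level_def set_eq using card_image[OF inj] unfolding I_def by simp
qed

theorem theorem1p2:
  fixes A :: "real set" and l :: nat
  assumes "finite A" and "\<forall>a\<in>A. a > 0"
  shows "F_gen l A = (F_gen 1 A) ^ l"
proof -
  define N where "N = (\<lambda>l n. card (TL A l {..<n}))"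
  have F: "\<And>l. F_gen l A = Abs_fps (\<lambda>n. of_nat (N l n) / fact n)"
    unfolding F_gen_def N_def using r_level_eq[OF assms] by simp
  have N0: "\<And>n. N 0 n = (if n = 0 then 1 else 0)"
    unfolding N_def by (subst TL0) auto
  have Nrec: "N l n = (\<Sum>k\<le>n. (n choose k) * (N 1 k * N (l - 1) (n - k)))" if l: "l \<ge> 1" for l n
  proof -
    have "N l n = (\<Sum>T\<in>Pow {..<n}. card (TL A 1 T) * card (TL A (l - 1) ({..<n} - T)))"
      unfolding N_def by (rule TL_rec[OF assms(1) assms(2) _ l]) simp
    also have "\<dots> = (\<Sum>T\<in>Pow {..<n}. N 1 (card T) * N (l - 1) (n - card T))"
    proof (rule sum.cong[OF refl])
      fix T assume T: "T \<in> Pow {..<n}"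
      then have fT: "finite T" using finite_subset by auto
      have "card ({..<n} - T) = n - card T" using T fT by (simp add: card_Diff_subset)
      then show "card (TL A 1 T) * card (TL A (l - 1) ({..<n} - T)) = N 1 (card T) * N (l - 1) (n - card T)"
        unfolding N_def using TL_card_std[OF assms(1) fT, of 1] TL_card_std[OF assms(1), of "{..<n} - T" "l - 1"]
        by simp
    qed
    also have "\<dots> = (\<Sum>k\<le>n. (n choose k) * (N 1 k * N (l - 1) (n - k)))"
      using sum_Pow_card[of "{..<n}" "\<lambda>k. N 1 k * N (l - 1) (n - k)"] by simp
    finally show ?thesis .
  qed
  show ?thesis unfolding F using fps_pow_from_rec[of N l, OF N0 Nrec] by simp
qed


end
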